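(* Let $n$ be even, let $\varphi\in(0,1)$, and consider the problem BPAOAZ (defined in the context). The expected running time of $\text{EMPMO}_{\text{random}}$, in which party 1 is chosen with probability $\varphi$ and party 2 with probability $1-\varphi$ in each iteration, applied to BPAOAZ is bounded by $O\left(\left(\frac{1}{\varphi}+\frac{1}{1-\varphi}\right)\frac{n^2}{2}\log n\right)$.
   Context: BPAOAZ: for $\mathbf{x}=(x_1,\dots,x_n)\in\{0,1\}^n$ with $n$ even, party 1 has objectives $f_{11}(\mathbf{x})=\sum_{i=n/2+1}^{n}x_i$ and $f_{12}(\mathbf{x})=\sum_{i=1}^{n/2}x_i+\sum_{i=n/2+1}^{n}(1-x_i)$; party 2 has objectives $f_{21}(\mathbf{x})=\sum_{i=1}^{n/2}(1-x_i)+\sum_{i=n/2+1}^{n}x_i$ and $f_{22}(\mathbf{x})=\sum_{i=1}^{n/2}x_i$; all objectives are maximized. $F_m=(f_{m1},f_{m2})$. For party $m$: $\mathbf{z}\succeq_m\mathbf{x}$ if $f_{mk}(\mathbf{z})\ge f_{mk}(\mathbf{x})$ for $k=1,2$; $\mathbf{z}\succ_m\mathbf{x}$ if moreover strict for some $k$. The common Pareto set (solutions Pareto optimal for both parties) is $\{1^n\}$. One-bit mutation flips one uniformly random bit. $\text{EMPMO}_{\text{random}}$: choose $\mathbf{x}$ uniformly from $\{0,1\}^n$, $P=\{\mathbf{x}\}$. Each iteration: pick $\mathbf{x}\in P$ uniformly at random; pick party $m$ ($m=1$ with probability $\varphi$, $m=2$ with probability $1-\varphi$); apply one-bit mutation to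 $\mathbf{x}$ to get $\mathbf{x}'$; if no $\mathbf{z}\in P$ satisfies $\mathbf{z}\succ_m\mathbf{x}'$ or $F_m(\mathbf{z})=F_m(\mathbf{x}')$, set $P\leftarrow(P\setminus\{\mathbf{z}\in P:\mathbf{x}'\succ_m\mathbf{z}\})\cup\{\mathbf{x}'\}$; then set $P\leftarrow\{\mathbf{z}\in P:\nexists\,\mathbf{z}'\in P\setminus\{\mathbf{z}\}\text{ with }\mathbf{z}'\succeq_m\mathbf{z}\}$. The running time is the number of fitness evaluations (mutations) until the common Pareto-optimal solution is included in the population for the first time. *)

theory Defs
  imports "HOL-Probability.Probability"
begin

text \<open>Bit strings of length n are boolean lists; position i (0-based) corresponds to
  x_{i+1} of the paper. The first half is positions i < n div 2.\<close>

definition ones_first :: "nat \<Rightarrow> bool list \<Rightarrow> nat" where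
  "ones_first n x = (\<Sum>i<n div 2. of_bool (x ! i))"

definition ones_second :: "nat \<Rightarrow> bool list \<Rightarrow> nat" where
  "ones_second n x = (\<Sum>i\<in>{n div 2..<n}. of_bool (x ! i))"

definition zeros_first :: "nat \<Rightarrow> bool list \<Rightarrow> nat" where
  "zeros_first n x = (\<Sum>i<n div 2. of_bool (\<not> x ! i))"

definition zeros_second :: "nat \<Rightarrow> bool list \<Rightarrow> nat" where
  "zeros_second n x = (\<Sum>i\<in>{n div 2..<n}. of_bool (\<not> x ! i))"

text \<open>Objectives of BPAOAZ. Parties are encoded as booleans: True = party 1, False = party 2.\<close>

definition f11 :: "nat \<Rightarrow> bool list \<Rightarrow> nat" where
  "f11 n x = ones_second n x"
definition f12 :: "nat \<Rightarrow> bool list \<Rightarrow> nat" where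
  "f12 n x = ones_first n x + zeros_second n x"
definition f21 :: "nat \<Rightarrow> bool list \<Rightarrow> nat" where
  "f21 n x = zeros_first n x + ones_second n x"
definition f22 :: "nat \<Rightarrow> bool list \<Rightarrow> nat" where
  "f22 n x = ones_first n x"

definition Fobj :: "nat \<Rightarrow> bool \<Rightarrow> bool list \<Rightarrow> nat \<times> nat" where
  "Fobj n m x = (if m then (f11 n x, f12 n x) else (f21 n x, f22 n x))"

definition weakdom :: "nat \<Rightarrow> bool \<Rightarrow> bool list \<Rightarrow> bool list \<Rightarrow> bool" where
  "weakdom n m z x \<longleftrightarrow> fst (Fobj n m z) \<ge> fst (Fobj n m x) \<and> snd (Fobj n m z) \<ge> snd (Fobj n m x)"

definition dom :: "nat \<Rightarrow> bool \<Rightarrow> bool list \<Rightarrow> bool list \<Rightarrow> bool" where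
  "dom n m z x \<longleftrightarrow> weakdom n m z x \<and>
     (fst (Fobj n m z) > fst (Fobj n m x) \<or> snd (Fobj n m z) > snd (Fobj n m x))"

definition flip_bit :: "bool list \<Rightarrow> nat \<Rightarrow> bool list" where
  "flip_bit x i = x[i := \<not> x ! i]"

definition update_pop :: "nat \<Rightarrow> bool \<Rightarrow> bool list set \<Rightarrow> bool list \<Rightarrow> bool list set" where
  "update_pop n m P x' =
     (let P1 = (if \<not> (\<exists>z\<in>P. dom n m z x' \<or> Fobj n m z = Fobj n m x')
                then (P - {z\<in>P. dom n m x' z}) \<union> {x'} else P)
      in {z\<in>P1. \<not> (\<exists>z'\<in>P1 - {z}. weakdom n m z' z)})"

text \<open>One iteration of EMPMO_random (phi = probability of choosing party 1).
  The guard for the empty population is never triggered (the population stays nonempty);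
  it only makes the definition total.\<close>

definition empmo_step :: "nat \<Rightarrow> real \<Rightarrow> bool list set \<Rightarrow> bool list set pmf" where
  "empmo_step n \<phi> P =
     (if P = {} then return_pmf P else
      do { x \<leftarrow> pmf_of_set P;
           m \<leftarrow> bernoulli_pmf \<phi>;
           i \<leftarrow> pmf_of_set {..<n};
           return_pmf (update_pop n m P (flip_bit x i)) })"

definition all_ones :: "nat \<Rightarrow> bool list" where
  "all_ones n = replicate n True"

definition stopped_step :: "nat \<Rightarrow> real \<Rightarrow> bool list set \<Rightarrow> bool list set pmf" where
  "stopped_step n \<phi> P = (if all_ones n \<in> P then return_pmf P else empmo_step n \<phi> P)"

fun pop_dist :: "nat \<Rightarrow> real \<Rightarrow> nat \<Rightarrow> bool list set pmf" where
  "pop_dist n \<phi> 0 = map_pmf (\<lambda>x. {x}) (pmf_of_set {x. length x = n})"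
| "pop_dist n \<phi> (Suc t) = bind_pmf (pop_dist n \<phi> t) (stopped_step n \<phi>)"

text \<open>Expected running time: E[T] = sum over t \<ge> 0 of Pr[T > t], where T > t iff 1^n is not
  in the population after t mutations (of the stopped process).\<close>

definition expected_runtime :: "nat \<Rightarrow> real \<Rightarrow> ennreal" where
  "expected_runtime n \<phi> =
     (\<Sum>t. ennreal (measure_pmf.prob (pop_dist n \<phi> t) {P. all_ones n \<notin> P}))"

end

theory Submission
  imports Defs "HOL-Analysis.Harmonic_Numbers"
begin


definition cnt :: "nat \<Rightarrow> bool list \<Rightarrow> nat" where
  "cnt n z = ones_first n z + ones_second n z"

definition ab :: "nat \<Rightarrow> bool list \<Rightarrow> nat \<times> nat" where
  "ab n z = (ones_first n z, ones_second n z)"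

lemma of_bool_compl: "of_bool p + of_bool (\<not> p) = (1::nat)" by simp

lemma ones_zeros_first: "ones_first n z + zeros_first n z = n div 2"
proof -
  have "ones_first n z + zeros_first n z = (\<Sum>i<n div 2. of_bool (z!i) + of_bool (\<not> z!i))"
    unfolding ones_first_def zeros_first_def by (simp only: sum.distrib)
  also have "\<dots> = (\<Sum>i<n div 2. (1::nat))" by (simp only: of_bool_compl)
  finally show ?thesis by simp
qed

lemma ones_zeros_second: "ones_second n z + zeros_second n z = n - n div 2"
proof -
  have "ones_second n z + zeros_second n z = (\<Sum>i\<in>{n div 2..<n}. of_bool (z!i) + of_bool (\<not> z!i))"
    unfolding ones_second_def zeros_second_def by (simp only: sum.distrib)
  also have "\<dots> = (\<Sum>i\<in>{n div 2..<n}. (1::nat))" by (simp only: of_bool_compl)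
  finally show ?thesis by simp
qed

lemma cnt_sum: "cnt n z = (\<Sum>j<n. of_bool (z!j))"
proof -
  have "(\<Sum>j<n. of_bool (z!j)) = (\<Sum>j\<in>{0..<n div 2}. of_bool (z!j)) + (\<Sum>j\<in>{n div 2..<n}. of_bool (z!j))"
    by (simp only: lessThan_atLeast0 sum.atLeastLessThan_concat[of 0 "n div 2" n, symmetric])
  then show ?thesis unfolding cnt_def ones_first_def ones_second_def lessThan_atLeast0 by metis
qed

lemma Fobj_eq: "Fobj n m z = (if m then (ones_second n z, ones_first n z + (n - n div 2 - ones_second n z))
   else (n div 2 - ones_first n z + ones_second n z, ones_first n z))"
  using ones_zeros_first[of n z] ones_zeros_second[of n z]
  unfolding Fobj_def f11_def f12_def f21_def f22_def by auto

lemma weakdom_eq: "weakdom n m z' z \<longleftrightarrow> fst (Fobj n m z') \<ge> fst (Fobj n m z) \<and> snd (Fobj n m z') \<ge> snd (Fobj n m z)"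
  by (simp add: weakdom_def)

lemma arith_wd:
  fixes a b a' b' h1 h2 :: nat
  assumes "a \<le> h1" "b \<le> h2" "a' \<le> h1" "b' \<le> h2"
    "if m then b' \<ge> b \<and> a' + (h2 - b') \<ge> a + (h2 - b) else h1 - a' + b' \<ge> h1 - a + b \<and> a' \<ge> a"
  shows "a + b \<le> a' + b' \<and> ((a', b') \<noteq> (a, b) \<longrightarrow> a + b < a' + b')"
  using assms by (cases m) auto

lemma arith_eq:
  fixes a b a' b' h1 h2 :: nat
  assumes "a \<le> h1" "b \<le> h2" "a' \<le> h1" "b' \<le> h2"
    "if m then b' = b \<and> a' + (h2 - b') = a + (h2 - b) else h1 - a' + b' = h1 - a + b \<and> a' = a"
  shows "a = a' \<and> b = b'"
  using assms by (cases m) auto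

lemma ones_bd: "ones_first n z \<le> n div 2" "ones_second n z \<le> n - n div 2"
  using ones_zeros_first[of n z] ones_zeros_second[of n z] by auto

lemma weakdom_cnt:
  assumes "weakdom n m z' z"
  shows "cnt n z \<le> cnt n z' \<and> (ab n z' \<noteq> ab n z \<longrightarrow> cnt n z < cnt n z')"
proof -
  have "if m then ones_second n z' \<ge> ones_second n z \<and> ones_first n z' + (n - n div 2 - ones_second n z') \<ge> ones_first n z + (n - n div 2 - ones_second n z)
     else n div 2 - ones_first n z' + ones_second n z' \<ge> n div 2 - ones_first n z + ones_second n z \<and> ones_first n z' \<ge> ones_first n z"
    using assms by (cases m) (simp_all add: weakdom_def Fobj_eq)
  from arith_wd[OF ones_bd(1)[of n z] ones_bd(2)[of n z] ones_bd(1)[of n z'] ones_bd(2)[of n z'] this]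
  show ?thesis unfolding cnt_def ab_def .
qed

lemma ab_Fobj: "ab n z = ab n z' \<Longrightarrow> Fobj n m z = Fobj n m z'"
  unfolding Fobj_eq ab_def by auto

lemma Fobj_ab: assumes "Fobj n m z = Fobj n m z'" shows "ab n z = ab n z'"
proof -
  have "if m then ones_second n z' = ones_second n z \<and> ones_first n z' + (n - n div 2 - ones_second n z') = ones_first n z + (n - n div 2 - ones_second n z)
     else n div 2 - ones_first n z' + ones_second n z' = n div 2 - ones_first n z + ones_second n z \<and> ones_first n z' = ones_first n z"
    using assms by (cases m) (auto simp: Fobj_eq)
  from arith_eq[OF ones_bd(1)[of n z] ones_bd(2)[of n z] ones_bd(1)[of n z'] ones_bd(2)[of n z'] this]
  show ?thesis unfolding ab_def by simp
qed

lemma dom_cnt: "dom n m z' z \<Longrightarrow> cnt n z < cnt n z'"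
  using weakdom_cnt[of n m z' z] ab_Fobj[of n z' z m] unfolding dom_def
  by (metis less_irrefl)

lemma same_key_weakdom:
  "(if m then ones_second n z = ones_second n z' else ones_first n z = ones_first n z')
   \<Longrightarrow> weakdom n m z z' \<or> weakdom n m z' z"
  unfolding weakdom_def Fobj_eq by (cases m) auto

lemma ones_le: "ones_first n z \<le> n" "ones_second n z \<le> n"
  using ones_zeros_first[of n z] ones_zeros_second[of n z] by auto

definition Mx :: "nat \<Rightarrow> bool list set \<Rightarrow> nat" where
  "Mx n P = Max (cnt n ` P)"

definition Inv :: "nat \<Rightarrow> bool list set \<Rightarrow> bool" where
  "Inv n P \<longleftrightarrow> finite P \<and> P \<noteq> {} \<and> (\<forall>z\<in>P. length z = n) \<and> inj_on (ab n) P \<and> card P \<le> Suc n"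

lemma length_flip[simp]: "length (flip_bit x i) = length x"
  by (simp add: flip_bit_def)

lemma cnt_flip:
  assumes "length x = n" "i < n" "\<not> x ! i"
  shows "cnt n (flip_bit x i) = Suc (cnt n x)"
proof -
  have "cnt n (flip_bit x i) = (\<Sum>j<n. of_bool (flip_bit x i ! j))" by (rule cnt_sum)
  also have "\<dots> = of_bool (flip_bit x i ! i) + (\<Sum>j\<in>{..<n} - {i}. of_bool (flip_bit x i ! j))"
    using assms by (subst sum.remove[of _ i]) auto
  also have "(\<Sum>j\<in>{..<n} - {i}. of_bool (flip_bit x i ! j)) = (\<Sum>j\<in>{..<n} - {i}. of_bool (x ! j))"
    using assms by (intro sum.cong) (auto simp: flip_bit_def)
  also have "of_bool (flip_bit x i ! i) = (1::nat)" using assms by (simp add: flip_bit_def)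
  also have "(\<Sum>j\<in>{..<n} - {i}. of_bool (x ! j)) = (\<Sum>j<n. of_bool (x ! j)) - (of_bool (x ! i) :: nat)"
    using assms by (subst sum.remove[of _ i, where A="{..<n}"]) (auto simp del: sum_of_bool_eq)
  also have "\<dots> = cnt n x" using assms by (simp add: cnt_sum del: sum_of_bool_eq)
  finally show ?thesis by simp
qed

lemma cnt_ab: "ab n z = ab n z' \<Longrightarrow> cnt n z = cnt n z'"
  unfolding ab_def cnt_def by simp

lemma update_props:
  fixes m :: bool
  assumes inv: "Inv n P" and xP: "x \<in> P" and i: "i < n"
  defines "x' \<equiv> flip_bit x i"
  defines "U \<equiv> update_pop n m P x'"
  shows "Inv n U \<and> Mx n P \<le> Mx n U \<and> ((cnt n x = Mx n P \<and> \<not> x ! i) \<longrightarrow> Mx n P < Mx n U)"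
proof -
  from inv have fin: "finite P" and ne: "P \<noteq> {}" and len: "\<forall>z\<in>P. length z = n"
    and inj: "inj_on (ab n) P" unfolding Inv_def by auto
  have lenx': "length x' = n" using len xP unfolding x'_def by simp
  define acc where "acc = (\<not> (\<exists>z\<in>P. dom n m z x' \<or> Fobj n m z = Fobj n m x'))"
  define P1 where "P1 = (if acc then (P - {z\<in>P. dom n m x' z}) \<union> {x'} else P)"
  have U_eq: "U = {z\<in>P1. \<not> (\<exists>z'\<in>P1 - {z}. weakdom n m z' z)}"
    unfolding U_def update_pop_def Let_def P1_def acc_def by simp
  have fin1: "finite P1" using fin unfolding P1_def by auto
  have len1: "\<forall>z\<in>P1. length z = n" using len lenx' unfolding P1_def by auto
  have ne1: "P1 \<noteq> {}" using ne unfolding P1_def by auto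
  have inj1: "inj_on (ab n) P1"
  proof (cases acc)
    case True
    have nz: "\<forall>z\<in>P. ab n z \<noteq> ab n x'" using True ab_Fobj unfolding acc_def by metis
    have "inj_on (ab n) (insert x' (P - {z\<in>P. dom n m x' z}))"
      using inj nz unfolding inj_on_def by (metis (no_types, lifting) Diff_iff insert_iff)
    then show ?thesis using True unfolding P1_def by simp
  next
    case False
    then show ?thesis using inj unfolding P1_def by simp
  qed
  have UP1: "U \<subseteq> P1" unfolding U_eq by auto
  obtain w where w: "w \<in> P1" "cnt n w = Max (cnt n ` P1)"
    using Max_in[of "cnt n ` P1"] fin1 ne1 by fastforce
  have wU: "w \<in> U"
  proof -
    have "\<not> weakdom n m z' w" if "z' \<in> P1 - {w}" for z'
    proof
      assume wd: "weakdom n m z' w"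
      have "ab n z' \<noteq> ab n w" using inj1 that w(1) by (auto dest: inj_onD)
      then have "cnt n w < cnt n z'" using weakdom_cnt[OF wd] by blast
      moreover have "cnt n z' \<le> Max (cnt n ` P1)" using that fin1 by auto
      ultimately show False using w(2) by simp
    qed
    then show ?thesis unfolding U_eq using w(1) by blast
  qed
  have finU: "finite U" using UP1 fin1 finite_subset by blast
  have MU: "Mx n U = Max (cnt n ` P1)"
  proof (rule antisym)
    show "Mx n U \<le> Max (cnt n ` P1)" unfolding Mx_def
      using UP1 wU finU fin1 by (intro Max_mono) auto
    show "Max (cnt n ` P1) \<le> Mx n U" unfolding Mx_def using w wU finU by (metis Max_ge finite_imageI imageI)
  qed
  have MP1: "Mx n P \<le> Max (cnt n ` P1)"
  proof -
    obtain y where y: "y \<in> P" "cnt n y = Mx n P"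
      using Max_in[of "cnt n ` P"] fin ne unfolding Mx_def by fastforce
    show ?thesis
    proof (cases "y \<in> P1")
      case True then show ?thesis using y fin1 by (metis Max_ge finite_imageI imageI)
    next
      case False
      then have "acc" "dom n m x' y" using y(1) unfolding P1_def by (auto split: if_splits)
      then have "x' \<in> P1" "cnt n y < cnt n x'" using dom_cnt unfolding P1_def by auto
      then show ?thesis using y fin1 by (metis Max_ge finite_imageI imageI less_imp_le order_trans)
    qed
  qed
  have prog: "Mx n P < Mx n U" if c: "cnt n x = Mx n P" "\<not> x ! i"
  proof -
    have cx': "cnt n x' = Suc (Mx n P)" using cnt_flip[of x n i] c len xP i unfolding x'_def by simp
    have le: "cnt n z \<le> Mx n P" if "z \<in> P" for z using that fin unfolding Mx_def by auto
    have acc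
      unfolding acc_def
    proof
      assume "\<exists>z\<in>P. dom n m z x' \<or> Fobj n m z = Fobj n m x'"
      then obtain z where z: "z \<in> P" "dom n m z x' \<or> Fobj n m z = Fobj n m x'" by blast
      then have "cnt n x' \<le> cnt n z" using dom_cnt Fobj_ab cnt_ab by (metis less_imp_le order_refl)
      then show False using le[OF z(1)] cx' by simp
    qed
    then have "x' \<in> P1" unfolding P1_def by simp
    then have "cnt n x' \<le> Max (cnt n ` P1)" using fin1 by auto
    then show ?thesis using MU cx' by simp
  qed
  define key where "key = (\<lambda>z. if m then ones_second n z else ones_first n z)"
  have injk: "inj_on key U"
  proof (rule inj_onI, rule ccontr)
    fix z z' assume zz: "z \<in> U" "z' \<in> U" "key z = key z'" "z \<noteq> z'"
    then have "weakdom n m z z' \<or> weakdom n m z' z"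
      using same_key_weakdom[of m n z z'] unfolding key_def by (cases m) auto
    then show False using zz UP1 unfolding U_eq by blast
  qed
  have "key ` U \<subseteq> {..n}" unfolding key_def using ones_le by auto
  then have "card (key ` U) \<le> Suc n" by (metis card_atMost card_mono finite_atMost)
  then have cardU: "card U \<le> Suc n" using card_image[OF injk] by simp
  have "Inv n U" unfolding Inv_def using finU wU len1 UP1 inj_on_subset[OF inj1 UP1] cardU by auto
  then show ?thesis using MU MP1 prog by simp
qed

lemma potential:
  fixes K :: "'s \<Rightarrow> 's pmf" and G :: "'s \<Rightarrow> ennreal" and d :: "nat \<Rightarrow> 's pmf"
  assumes dS: "\<And>t. d (Suc t) = bind_pmf (d t) K"
    and invK: "\<And>s s'. I s \<Longrightarrow> s' \<in> set_pmf (K s) \<Longrightarrow> I s'"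
    and inv0: "\<And>s. s \<in> set_pmf (d 0) \<Longrightarrow> I s"
    and step: "\<And>s. I s \<Longrightarrow> (\<integral>\<^sup>+s'. G s' \<partial>K s) + indicator B s \<le> G s"
  shows "(\<integral>\<^sup>+s. G s \<partial>d T) + (\<Sum>t<T. emeasure (measure_pmf (d t)) B) \<le> \<integral>\<^sup>+ s. G s \<partial>d 0"
proof -
  have inv: "\<forall>s\<in>set_pmf (d t). I s" for t
  proof (induction t)
    case 0 then show ?case using inv0 by blast
  next
    case (Suc t)
    show ?case
    proof
      fix s assume "s \<in> set_pmf (d (Suc t))"
      then obtain s0 where "s0 \<in> set_pmf (d t)" "s \<in> set_pmf (K s0)" by (auto simp: dS)
      then show "I s" using Suc.IH invK by blast
    qed
  qed
  show ?thesis
  proof (induction T)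
    case 0
    then show ?case by simp
  next
    case (Suc T)
    have "(\<integral>\<^sup>+s. G s \<partial>d (Suc T)) + (\<Sum>t<Suc T. emeasure (measure_pmf (d t)) B)
        = ((\<integral>\<^sup>+s. (\<integral>\<^sup>+s'. G s' \<partial>K s) \<partial>d T) + emeasure (measure_pmf (d T)) B) + (\<Sum>t<T. emeasure (measure_pmf (d t)) B)"
      by (simp add: dS add.assoc add.commute add.left_commute)
    also have "(\<integral>\<^sup>+s. (\<integral>\<^sup>+s'. G s' \<partial>K s) \<partial>d T) + emeasure (measure_pmf (d T)) B
        = (\<integral>\<^sup>+s. (\<integral>\<^sup>+s'. G s' \<partial>K s) + indicator B s \<partial>d T)"
      by (subst nn_integral_add) auto
    also have "\<dots> \<le> (\<integral>\<^sup>+s. G s \<partial>d T)"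
      by (rule nn_integral_mono_AE, rule AE_pmfI) (use inv step in blast)
    finally show ?case using Suc.IH by (meson add_right_mono order_trans)
  qed
qed

lemma cnt_le: "cnt n z \<le> n"
  unfolding cnt_def using ones_bd[of n z] by linarith

lemma cnt_full:
  assumes "length z = n" "cnt n z = n"
  shows "z = all_ones n"
proof -
  have "card ({..<n} \<inter> {j. z ! j}) = n" using assms(2) unfolding cnt_sum by simp
  then have "{..<n} \<inter> {j. z ! j} = {..<n}"
    by (metis Int_lower1 card_lessThan card_subset_eq finite_lessThan)
  then have "\<forall>j<n. z ! j" by auto
  then show ?thesis using assms(1) unfolding all_ones_def by (intro nth_equalityI) auto
qed

lemma zero_bits:
  assumes "length z = n"
  shows "card {j\<in>{..<n}. \<not> z ! j} = n - cnt n z"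
proof -
  have "{..<n} = ({..<n} \<inter> {j. z ! j}) \<union> {j\<in>{..<n}. \<not> z ! j}" by auto
  then have "card {..<n} = card (({..<n} \<inter> {j. z ! j}) \<union> {j\<in>{..<n}. \<not> z ! j})" by simp
  also have "\<dots> = card ({..<n} \<inter> {j. z ! j}) + card {j\<in>{..<n}. \<not> z ! j}"
    by (rule card_Un_disjoint) auto
  finally have "n = card ({..<n} \<inter> {j. z ! j}) + card {j\<in>{..<n}. \<not> z ! j}" by simp
  moreover have "cnt n z = card ({..<n} \<inter> {j. z ! j})" unfolding cnt_sum by simp
  ultimately show ?thesis by simp
qed

lemma not_done_M:
  assumes "Inv n P" "all_ones n \<notin> P"
  shows "Mx n P < n"
proof -
  have fin: "finite P" "P \<noteq> {}" using assms unfolding Inv_def by auto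
  obtain z where z: "z \<in> P" "cnt n z = Mx n P" using Max_in[of "cnt n ` P"] fin unfolding Mx_def by fastforce
  have "cnt n z \<noteq> n"
  proof
    assume "cnt n z = n"
    then have "z = all_ones n" using cnt_full[of z n] assms(1) z(1) unfolding Inv_def by auto
    then show False using assms z by simp
  qed
  then show ?thesis using cnt_le[of n z] z by simp
qed

definition Gp :: "nat \<Rightarrow> bool list set \<Rightarrow> ennreal" where
  "Gp n P = ennreal (real (Suc n * n) * harm (n - Mx n P))"

lemma Mx_le: "Inv n P \<Longrightarrow> Mx n P \<le> n"
  unfolding Inv_def Mx_def using cnt_le by (subst Max_le_iff) auto

lemma Mx_ge: "finite P \<Longrightarrow> z \<in> P \<Longrightarrow> cnt n z \<le> Mx n P"
  unfolding Mx_def by auto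

lemma support_step:
  assumes "Inv n P" "all_ones n \<notin> P" "Q \<in> set_pmf (stopped_step n \<phi> P)"
  shows "\<exists>x\<in>P. \<exists>m i. i < n \<and> Q = update_pop n m P (flip_bit x i)"
proof -
  have "n > 0" using not_done_M[OF assms(1,2)] by simp
  then have ne: "{..<n} \<noteq> {}" by auto
  have "finite P" "P \<noteq> {}" using assms(1) unfolding Inv_def by auto
  then show ?thesis using assms(2,3) ne unfolding stopped_step_def empmo_step_def
    by (auto simp: set_bind_pmf)
qed

lemma inv_step:
  assumes "Inv n P" "Q \<in> set_pmf (stopped_step n \<phi> P)"
  shows "Inv n Q \<and> Mx n P \<le> Mx n Q"
proof (cases "all_ones n \<in> P")
  case True
  then show ?thesis using assms unfolding stopped_step_def by simp
next
  case False
  then obtain x m i where "x \<in> P" "i < n" "Q = update_pop n m P (flip_bit x i)"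
    using support_step[OF assms(1) False assms(2)] by blast
  then show ?thesis using update_props[OF assms(1)] by blast
qed

lemma emeasure_pmf_of_set_real:
  assumes "finite S" "S \<noteq> {}"
  shows "emeasure (measure_pmf (pmf_of_set S)) A = ennreal (real (card (S \<inter> A)) / real (card S))"
  using assms by (simp add: measure_pmf.emeasure_eq_measure measure_pmf_of_set)

lemma step_lb:
  assumes inv: "Inv n P" and nd: "all_ones n \<notin> P"
  shows "ennreal (real (n - Mx n P) / real n / real (card P))
          \<le> emeasure (measure_pmf (stopped_step n \<phi> P)) {Q. Mx n P < Mx n Q}"
proof -
  define k where "k = Mx n P"
  define A where "A = {Q. Mx n P < Mx n Q}"
  have kn: "k < n" using not_done_M[OF inv nd] unfolding k_def .
  have fin: "finite P" "P \<noteq> {}" and len: "\<forall>z\<in>P. length z = n" using inv unfolding Inv_def by auto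
  obtain w where w: "w \<in> P" "cnt n w = k" using Max_in[of "cnt n ` P"] fin unfolding Mx_def k_def by fastforce
  define Z where "Z = {j\<in>{..<n}. \<not> w ! j}"
  have ZZ: "{..<n} \<inter> Z = Z" unfolding Z_def by auto
  have cZ: "card Z = n - k" using zero_bits[of w n] len w unfolding Z_def by simp
  have ne: "{..<n} \<noteq> {}" using kn by auto
  define U where "U = (\<lambda>x m i. update_pop n m P (flip_bit x i))"
  define r where "r = real (n - k) / real n"
  have inner: "ennreal r \<le> (\<integral>\<^sup>+i. indicator A (U w m i) \<partial>measure_pmf (pmf_of_set {..<n}))" for m
  proof -
    have "ennreal r = emeasure (measure_pmf (pmf_of_set {..<n})) Z"
      using ne cZ ZZ by (subst emeasure_pmf_of_set_real) (simp_all add: r_def)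
    also have "\<dots> = (\<integral>\<^sup>+i. indicator Z i \<partial>measure_pmf (pmf_of_set {..<n}))" by simp
    also have "\<dots> \<le> (\<integral>\<^sup>+i. indicator A (U w m i) \<partial>measure_pmf (pmf_of_set {..<n}))"
    proof (rule nn_integral_mono)
      fix i
      show "indicator Z i \<le> (indicator A (U w m i) :: ennreal)"
      proof (cases "i \<in> Z")
        case True
        then have "i < n" "\<not> w ! i" unfolding Z_def by auto
        then have "U w m i \<in> A" using update_props[OF inv w(1), of i m] w(2)
          unfolding A_def U_def k_def by auto
        then show ?thesis using True by simp
      qed simp
    qed
    finally show ?thesis .
  qed
  have mid: "ennreal r \<le> (\<integral>\<^sup>+m. (\<integral>\<^sup>+i. indicator A (U w m i) \<partial>measure_pmf (pmf_of_set {..<n})) \<partial>measure_pmf (bernoulli_pmf \<phi>))"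
  proof -
    have "ennreal r = (\<integral>\<^sup>+m. ennreal r \<partial>measure_pmf (bernoulli_pmf \<phi>))"
      by (simp add: measure_pmf.emeasure_space_1)
    also have "\<dots> \<le> (\<integral>\<^sup>+m. (\<integral>\<^sup>+i. indicator A (U w m i) \<partial>measure_pmf (pmf_of_set {..<n})) \<partial>measure_pmf (bernoulli_pmf \<phi>))"
      by (rule nn_integral_mono) (rule inner)
    finally show ?thesis .
  qed
  define F where "F = (\<lambda>x. (\<integral>\<^sup>+m. (\<integral>\<^sup>+i. indicator A (U x m i) \<partial>measure_pmf (pmf_of_set {..<n})) \<partial>measure_pmf (bernoulli_pmf \<phi>)))"
  have "emeasure (measure_pmf (stopped_step n \<phi> P)) A = (\<integral>\<^sup>+x. F x \<partial>measure_pmf (pmf_of_set P))"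
    using nd fin unfolding stopped_step_def empmo_step_def F_def U_def by simp
  also have "\<dots> \<ge> (\<integral>\<^sup>+x. ennreal r * indicator {w} x \<partial>measure_pmf (pmf_of_set P))"
  proof (rule nn_integral_mono)
    fix x show "ennreal r * indicator {w} x \<le> F x"
      using mid unfolding F_def by (cases "x = w") auto
  qed
  also have "(\<integral>\<^sup>+x. ennreal r * indicator {w} x \<partial>measure_pmf (pmf_of_set P)) = ennreal r * emeasure (measure_pmf (pmf_of_set P)) {w}"
    by (rule nn_integral_cmult_indicator) simp
  also have "emeasure (measure_pmf (pmf_of_set P)) {w} = ennreal (1 / real (card P))"
    using fin w by (subst emeasure_pmf_of_set_real) (auto simp: Int_absorb1)
  also have "ennreal r * ennreal (1 / real (card P)) = ennreal (real (n - Mx n P) / real n / real (card P))"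
    unfolding r_def k_def by (subst ennreal_mult[symmetric]) auto
  finally show ?thesis unfolding A_def .
qed



lemma step_bound:
  assumes inv: "Inv n P"
  shows "(\<integral>\<^sup>+Q. Gp n Q \<partial>stopped_step n \<phi> P) + indicator {P. all_ones n \<notin> P} P \<le> Gp n P"
proof (cases "all_ones n \<in> P")
  case True
  then show ?thesis by (simp add: stopped_step_def)
next
  case False
  define k where "k = Mx n P"
  define c where "c = real (Suc n * n)"
  define dd where "dd = c / real (n - k)"
  define K where "K = stopped_step n \<phi> P"
  define A where "A = {Q. Mx n P < Mx n Q}"
  have kn: "k < n" using not_done_M[OF inv False] unfolding k_def .
  have c0: "c \<ge> 0" unfolding c_def by simp
  have dd0: "dd \<ge> 0" unfolding dd_def c_def by simp
  have pt: "Gp n Q + ennreal dd * indicator A Q \<le> Gp n P" if "Q \<in> set_pmf K" for Q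
  proof -
    have IQ: "Inv n Q" "k \<le> Mx n Q" using inv_step[OF inv, of Q \<phi>] that unfolding K_def k_def by auto
    have MQ: "Mx n Q \<le> n" using Mx_le[OF IQ(1)] .
    show ?thesis
    proof (cases "k < Mx n Q")
      case True
      have h1: "harm (n - Mx n Q) \<le> (harm (n - k - 1) :: real)" using True by (intro harm_mono) simp
      have "harm (n - k) = harm (Suc (n - k - 1)) " using kn by (simp add: Suc_diff_Suc)
      also have "\<dots> = harm (n - k - 1) + inverse (real (n - k))" using kn
        by (subst harm_Suc) (simp add: Suc_diff_Suc of_nat_diff)
      finally have h2: "harm (n - k) = harm (n - k - 1) + inverse (real (n - k))" .
      have "c * harm (n - Mx n Q) + dd \<le> c * harm (n - k - 1) + c * inverse (real (n - k))"
        using mult_left_mono[OF h1 c0] unfolding dd_def by (simp add: divide_inverse)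
      also have "\<dots> = c * harm (n - k)" using h2 by (simp add: algebra_simps)
      finally have r: "c * harm (n - Mx n Q) + dd \<le> c * harm (n - k)" .
      have "Gp n Q + ennreal dd * indicator A Q = ennreal (c * harm (n - Mx n Q) + dd)"
        using True c0 dd0 unfolding Gp_def A_def c_def k_def
        by (simp add: ennreal_plus harm_nonneg)
      also have "\<dots> \<le> Gp n P" unfolding Gp_def c_def k_def using r unfolding c_def k_def
        by (intro ennreal_leI) simp
      finally show ?thesis .
    next
      case False
      then have "Mx n Q = k" using IQ by simp
      then show ?thesis unfolding A_def Gp_def k_def by simp
    qed
  qed
  have one: "1 \<le> ennreal dd * emeasure (measure_pmf K) A"
  proof -
    have fin: "finite P" "P \<noteq> {}" "card P \<le> Suc n" using inv unfolding Inv_def by auto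
    then have cp: "card P > 0" by (simp add: card_gt_0_iff)
    have lb: "ennreal (real (n - k) / real n / real (card P)) \<le> emeasure (measure_pmf K) A"
      using step_lb[OF inv False, of \<phi>] unfolding K_def A_def k_def .
    have aux: "(s * m) / a * (a / m / cc) = s / cc" if "a \<noteq> 0" "m \<noteq> 0" for s m a cc :: real
      using that by (simp add: field_simps)
    have "dd * (real (n - k) / real n / real (card P)) = real (Suc n) / real (card P)"
      unfolding dd_def c_def of_nat_mult using kn by (intro aux) auto
    also have "\<dots> \<ge> 1" using fin cp by simp
    finally have r1: "1 \<le> dd * (real (n - k) / real n / real (card P))" .
    have "1 \<le> ennreal (dd * (real (n - k) / real n / real (card P)))"
      using ennreal_leI[OF r1] by (simp only: ennreal_1)
    also have "\<dots> = ennreal dd * ennreal (real (n - k) / real n / real (card P))"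
      using dd0 by (rule ennreal_mult) simp
    also have "\<dots> \<le> ennreal dd * emeasure (measure_pmf K) A" by (rule mult_left_mono[OF lb]) simp
    finally show ?thesis .
  qed
  have "(\<integral>\<^sup>+Q. Gp n Q \<partial>K) + ennreal dd * emeasure (measure_pmf K) A
      = (\<integral>\<^sup>+Q. Gp n Q + ennreal dd * indicator A Q \<partial>K)"
    by (subst nn_integral_add) (auto simp: nn_integral_cmult_indicator)
  also have "\<dots> \<le> (\<integral>\<^sup>+Q. Gp n P \<partial>K)"
    by (rule nn_integral_mono_AE, rule AE_pmfI, rule pt)
  also have "\<dots> = Gp n P" by (simp add: measure_pmf.emeasure_space_1)
  finally have main: "(\<integral>\<^sup>+Q. Gp n Q \<partial>K) + ennreal dd * emeasure (measure_pmf K) A \<le> Gp n P" .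
  have "(\<integral>\<^sup>+Q. Gp n Q \<partial>K) + indicator {P. all_ones n \<notin> P} P = (\<integral>\<^sup>+Q. Gp n Q \<partial>K) + 1"
    using False by simp
  also have "\<dots> \<le> (\<integral>\<^sup>+Q. Gp n Q \<partial>K) + ennreal dd * emeasure (measure_pmf K) A"
    by (rule add_left_mono[OF one])
  also have "\<dots> \<le> Gp n P" by (rule main)
  finally show ?thesis unfolding K_def .
qed



lemma final_arith:
  fixes n :: nat and \<phi> :: real
  assumes n: "n \<ge> 3" and p: "0 < \<phi>" "\<phi> < 1"
  shows "real (Suc n * n) * harm n \<le> 2 * (1 / \<phi> + 1 / (1 - \<phi>)) * (real n ^ 2 / 2) * ln (real n)"
proof -
  have "exp 1 \<le> real n" using exp_le n by linarith
  then have "ln (exp 1) \<le> ln (real n)" using n by (subst ln_le_cancel_iff) auto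
  then have L: "1 \<le> ln (real n)" by simp
  have "harm n - ln (real n) \<le> harm 1 - ln (real 1)"
    using euler_mascheroni_sequence_decreasing[of 1 n] n by simp
  then have H: "harm n \<le> ln (real n) + 1" by (simp add: harm_def)
  have S: "4 \<le> 1 / \<phi> + 1 / (1 - \<phi>)"
  proof -
    have q: "4 * (\<phi> * (1 - \<phi>)) \<le> 1" using sum_squares_ge_zero[of "2*\<phi> - 1" 0]
      by (simp add: algebra_simps power2_eq_square)
    have pos: "\<phi> * (1 - \<phi>) > 0" using p by simp
    have "1 / \<phi> + 1 / (1 - \<phi>) = 1 / (\<phi> * (1 - \<phi>))" using p by (simp add: field_simps)
    also have "4 \<le> 1 / (\<phi> * (1 - \<phi>))" using q pos by (simp add: le_divide_eq)
    finally show ?thesis by simp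
  qed
  define X where "X = real n ^ 2 / 2 * ln (real n)"
  have X0: "X \<ge> 0" unfolding X_def using L by simp
  have "real (Suc n * n) * harm n \<le> real (Suc n * n) * (2 * ln (real n))"
    using H L by (intro mult_left_mono) auto
  also have "\<dots> \<le> (2 * real n * real n) * (2 * ln (real n))"
    using n L by (intro mult_right_mono) auto
  also have "\<dots> = 8 * X" unfolding X_def by (simp add: power2_eq_square algebra_simps)
  also have "\<dots> \<le> 2 * (1 / \<phi> + 1 / (1 - \<phi>)) * X" using S X0 by (intro mult_right_mono) auto
  finally show ?thesis unfolding X_def by (simp add: mult.assoc)
qed


theorem theorem2:
  shows "\<exists>C>0. \<exists>N. \<forall>n\<ge>N. \<forall>\<phi>::real. even n \<longrightarrow> 0 < \<phi> \<longrightarrow> \<phi> < 1 \<longrightarrow>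
           expected_runtime n \<phi> \<le>
             ennreal (C * (1 / \<phi> + 1 / (1 - \<phi>)) * (real n ^ 2 / 2) * ln (real n))"
proof (intro exI[of _ "2::real"] conjI)
  show "(0::real) < 2" by simp
  show "\<exists>N. \<forall>n\<ge>N. \<forall>\<phi>::real. even n \<longrightarrow> 0 < \<phi> \<longrightarrow> \<phi> < 1 \<longrightarrow>
           expected_runtime n \<phi> \<le>
             ennreal (2 * (1 / \<phi> + 1 / (1 - \<phi>)) * (real n ^ 2 / 2) * ln (real n))"
  proof (intro exI[of _ "3::nat"] allI impI)
    fix n :: nat and \<phi> :: real
    assume n: "3 \<le> n" and ev: "even n" and p: "0 < \<phi>" "\<phi> < 1"
    define d where "d = pop_dist n \<phi>"
    define B where "B = {P. all_ones n \<notin> P}"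
    define c where "c = real (Suc n * n)"
    have inv0: "Inv n s" if "s \<in> set_pmf (d 0)" for s
    proof -
      have fin: "finite {x::bool list. length x = n}"
        using finite_lists_length_eq[of "UNIV::bool set" n] by simp
      have "replicate n True \<in> {x::bool list. length x = n}" by simp
      then have ne: "{x::bool list. length x = n} \<noteq> {}" by blast
      from that obtain x where "length x = n" "s = {x}" using fin ne by (auto simp: d_def)
      then show ?thesis unfolding Inv_def by auto
    qed
    have pot: "(\<integral>\<^sup>+s. Gp n s \<partial>d T) + (\<Sum>t<T. emeasure (measure_pmf (d t)) B) \<le> \<integral>\<^sup>+ s. Gp n s \<partial>d 0" for T
      apply (rule potential[where K="stopped_step n \<phi>" and I="Inv n"])
      subgoal by (simp add: d_def)
      subgoal using inv_step by blast
      subgoal by (rule inv0)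
      subgoal unfolding B_def by (rule step_bound)
      done
    have G0: "(\<integral>\<^sup>+ s. Gp n s \<partial>d 0) \<le> ennreal (c * harm n)"
    proof -
      have "(\<integral>\<^sup>+ s. Gp n s \<partial>d 0) \<le> (\<integral>\<^sup>+ s. ennreal (c * harm n) \<partial>d 0)"
      proof (rule nn_integral_mono)
        fix s
        have "harm (n - Mx n s) \<le> (harm n :: real)" by (rule harm_mono) simp
        then show "Gp n s \<le> ennreal (c * harm n)" unfolding Gp_def c_def
          by (intro ennreal_leI mult_left_mono) auto
      qed
      also have "\<dots> = ennreal (c * harm n)" by (simp add: measure_pmf.emeasure_space_1)
      finally show ?thesis .
    qed
    have "expected_runtime n \<phi> = (\<Sum>t. emeasure (measure_pmf (d t)) B)"
      unfolding expected_runtime_def d_def B_def by (simp add: measure_pmf.emeasure_eq_measure)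
    also have "\<dots> \<le> ennreal (c * harm n)"
    proof (subst suminf_eq_SUP, rule SUP_least)
      fix T
      have "(\<Sum>t<T. emeasure (measure_pmf (d t)) B) \<le> (\<integral>\<^sup>+s. Gp n s \<partial>d T) + (\<Sum>t<T. emeasure (measure_pmf (d t)) B)"
        by (rule add_increasing) auto
      also have "\<dots> \<le> ennreal (c * harm n)" using pot[of T] G0 by (rule order_trans)
      finally show "(\<Sum>t<T. emeasure (measure_pmf (d t)) B) \<le> ennreal (c * harm n)" .
    qed
    also have "\<dots> \<le> ennreal (2 * (1 / \<phi> + 1 / (1 - \<phi>)) * (real n ^ 2 / 2) * ln (real n))"
      unfolding c_def using final_arith[OF n p] by (rule ennreal_leI)
    finally show "expected_runtime n \<phi> \<le> ennreal (2 * (1 / \<phi> + 1 / (1 - \<phi>)) * (real n ^ 2 / 2) * ln (real n))" .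
  qed
qed

end
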